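(* Let $0<p<q$ be coprime integers. Then $\mathbb{M}(\mathrm{ch}_{p/q}(L,LR))=\mathbb{L}(p,q)$. In other words, the modular knot associated with the word $\mathrm{ch}_{p/q}(L,LR)$ is the $(p,q)$-torus knot, i.e. the closure of $(\sigma_1\sigma_2\cdots\sigma_{p-1})^q\in B_p$.
   Context: Christoffel words: for coprime $0<p<q$, the snake graph $S(p/q)$ is the set of unit squares of the $q\times p$ grid (width $q$, height $p$) meeting the diagonal from $(0,0)$ to $(q,p)$. The lower Christoffel word $\mathrm{ch}_{p/q}(A,B)$ is obtained by following the lower boundary path of $S(p/q)$ from $(0,0)$ to $(q,p)$ and writing $A$ for each step one unit to the right and $B$ for each step one unit right followed by one unit up; equivalently, it is the word $w_1\cdots w_q$ with $w_i=B$ if $\lfloor ip/q\rfloor>\lfloor (i-1)p/q\rfloor$ and $w_i=A$ otherwise (e.g. $\mathrm{ch}_{4/7}(A,B)=ABABABB$). $\mathrm{ch}_{p/q}(L,LR)$ denotes the word over $\{L,R\}$ obtained by substituting $A\mapsto L$, $B\mapsto LR$. Modular braid of a word: for a primitive word $W$ (not a proper power of a shorter word) over $\{L,R\}$ of length $m\ge2$, with $\mathrm{cyc}$ moving the first letter to the end, let $\mathrm{rank}_j(W)$ ($1\le j\le m$) be the rank of $\mathrm{cyc}^{j-1}(W)$ among the cyclic permutations of $W$ in ascending lexicographic order with $L<R$, and $\mathrm{rank}_{m+1}(W)=\mathrm{rank}_1(W)$. $\mathbb{M}(W)$ is the $m$-strand braid joining the $\mathrm{rank}_j(W)$-th top point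 to the $\mathrm{rank}_{j+1}(W)$-th bottom point by straight segments ($1\le j\le m$), the strand from a top point whose cyclic permutation begins with $L$ passing over one whose cyclic permutation begins with $R$ at each crossing. Its closure is a modular knot. Lorenz braid $\mathbb{L}(p,q)$: the braid with $p+q$ strands in which the $q$ leftmost top points are joined in order (order-preservingly) to the bottom points $p+1,\dots,p+q$, and the $p$ rightmost top points are joined in order to the bottom points $1,\dots,p$, by straight segments, strands from the left top part passing over strands from the right top part. Braids are compared as geometric braid diagrams. *)

theory Defs
  imports Main
begin

datatype letter = L | R
datatype ab = A | B

fun lex_lt :: "letter list \<Rightarrow> letter list \<Rightarrow> bool" where
  "lex_lt (x # xs) (y # ys) = ((x = L \<and> y = R) \<or> (x = y \<and> lex_lt xs ys))"
| "lex_lt _ _ = False"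

text \<open>cyc moves the first letter to the end, so cyc^k = rotate k.\<close>
definition primitive :: "letter list \<Rightarrow> bool" where
  "primitive W \<longleftrightarrow> \<not> (\<exists>u k. k \<ge> 2 \<and> W = concat (replicate k u))"

definition christoffel :: "nat \<Rightarrow> nat \<Rightarrow> ab list" where
  "christoffel p q = map (\<lambda>i. if (i * p) div q > ((i - 1) * p) div q then B else A) [1..<q+1]"

definition ch_LLR :: "nat \<Rightarrow> nat \<Rightarrow> letter list" where
  "ch_LLR p q = concat (map (\<lambda>x. case x of A \<Rightarrow> [L] | B \<Rightarrow> [L, R]) (christoffel p q))"

text \<open>A braid diagram whose strands are straight segments is recorded as
 (number of strands, set of strands (top point, bottom point),
  set of ordered pairs (s, t) of crossing strands such that s passes over t).\<close>
type_synonym braid = "nat \<times> (nat \<times> nat) set \<times> ((nat \<times> nat) \<times> (nat \<times> nat)) set"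

definition crosses :: "nat \<times> nat \<Rightarrow> nat \<times> nat \<Rightarrow> bool" where
  "crosses s t \<longleftrightarrow> (fst s < fst t \<and> snd s > snd t) \<or> (fst s > fst t \<and> snd s < snd t)"

definition straight_braid :: "nat \<Rightarrow> (nat \<times> nat) set \<Rightarrow> (nat \<times> nat \<Rightarrow> nat \<times> nat \<Rightarrow> bool) \<Rightarrow> braid" where
  "straight_braid n S over = (n, S, {(s, t). s \<in> S \<and> t \<in> S \<and> crosses s t \<and> over s t})"

definition rank :: "letter list \<Rightarrow> nat \<Rightarrow> nat" where
  "rank W k = Suc (card {i. i < length W \<and> lex_lt (rotate i W) (rotate k W)})"

text \<open>Strand j (j = 1..m) joins top point rank_j to bottom point rank_{j+1}, rank_{m+1} = rank_1;
 here indexed by k = j - 1. The strand from a top point whose cyclic permutation begins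
 with L passes over the one whose cyclic permutation begins with R.\<close>
definition modular_braid :: "letter list \<Rightarrow> braid" where
  "modular_braid W = straight_braid (length W)
     {(rank W k, rank W (Suc k mod length W)) | k. k < length W}
     (\<lambda>s t. \<exists>k l. k < length W \<and> l < length W \<and> fst s = rank W k \<and> fst t = rank W l
              \<and> hd (rotate k W) = L \<and> hd (rotate l W) = R)"

definition lorenz_braid :: "nat \<Rightarrow> nat \<Rightarrow> braid" where
  "lorenz_braid p q = straight_braid (p + q)
     ({(i, p + i) | i. 1 \<le> i \<and> i \<le> q} \<union> {(q + i, i) | i. 1 \<le> i \<and> i \<le> p})
     (\<lambda>s t. fst s \<le> q \<and> q < fst t)"

end

theory Submission
  imports Defs "HOL-Number_Theory.Cong"
begin


lemma conv:
  fixes x p n :: nat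
  assumes "p < n"
  shows "(x div n < (x + p) div n) \<longleftrightarrow> (n - p \<le> x mod n)"
proof -
  have e: "(x + p) div n = x div n + (x mod n + p) div n"
  proof -
    have e0: "(x + p) div n = x div n + p div n + (x mod n + p mod n) div n" by (rule div_add1_eq)
    have "p div n = 0" "p mod n = p" using assms by simp_all
    then show ?thesis using e0 by simp
  qed
  have r: "x mod n < n" using assms by simp
  have n0: "0 < n" using assms by simp
  show ?thesis
  proof (cases "n - p \<le> x mod n")
    case True
    then have a: "n \<le> x mod n + p" by linarith
    have b: "x mod n + p - n < n" using r assms by linarith
    have "(x mod n + p) div n = Suc ((x mod n + p - n) div n)" by (rule le_div_geq[OF n0 a])
    also have "(x mod n + p - n) div n = 0" by (rule div_less[OF b])
    finally have "(x mod n + p) div n = 1" by simp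
    then show ?thesis using True e by simp
  next
    case False
    then have "x mod n + p < n" by linarith
    then have "(x mod n + p) div n = 0" by (rule div_less)
    then show ?thesis using False e by simp
  qed
qed

lemma step_le:
  fixes x p n :: nat
  assumes "p < n"
  shows "(x + p) div n \<le> x div n + 1"
proof -
  have e: "(x + p) div n = x div n + (x mod n + p) div n"
  proof -
    have e0: "(x + p) div n = x div n + p div n + (x mod n + p mod n) div n" by (rule div_add1_eq)
    have "p div n = 0" "p mod n = p" using assms by simp_all
    then show ?thesis using e0 by simp
  qed
  have r: "x mod n < n" using assms by simp
  have "x mod n + p < 2 * n" using r assms by linarith
  then have "(x mod n + p) div n < 2" by (rule less_mult_imp_div_less)
  then show ?thesis using e by linarith
qed

lemma div_bounds:
  fixes x q :: nat
  assumes "0 < q"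
  shows "(x div q) * q \<le> x" "x < (x div q + 1) * q"
proof -
  have a: "x div q * q + x mod q = x" by (rule div_mult_mod_eq)
  have b: "x mod q < q" using assms by simp
  have c: "(x div q + 1) * q = x div q * q + q" by simp
  show "(x div q) * q \<le> x" using a by linarith
  show "x < (x div q + 1) * q" using a b c by linarith
qed

definition hw :: "nat \<Rightarrow> nat \<Rightarrow> nat \<Rightarrow> letter" where
  "hw p q j = (if q \<le> j * p mod (p + q) then R else L)"

lemma hw_div:
  assumes "0 < q"
  shows "hw p q j = (if (j * p) div (p + q) < (Suc j * p) div (p + q) then R else L)"
proof -
  have pn: "p < p + q" using assms by simp
  have e: "Suc j * p = j * p + p" by simp
  have c: "((j * p) div (p + q) < (Suc j * p) div (p + q)) = (q \<le> j * p mod (p + q))"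
    unfolding e using conv[OF pn, of "j * p"] by (simp only: add_diff_cancel_left')
  show ?thesis by (simp only: hw_def c)
qed

fun phi :: "ab \<Rightarrow> letter list" where
  "phi A = [L]" | "phi B = [L, R]"

lemma ch_LLR_alt: "ch_LLR p q = concat (map phi (christoffel p q))"
proof -
  have "(\<lambda>x. case x of A \<Rightarrow> [L] | B \<Rightarrow> [L, R]) = phi"
  proof (rule ext)
    fix x show "(case x of A \<Rightarrow> [L] | B \<Rightarrow> [L, R]) = phi x" by (cases x) auto
  qed
  then show ?thesis unfolding ch_LLR_def by simp
qed

definition chg :: "nat \<Rightarrow> nat \<Rightarrow> nat \<Rightarrow> ab" where
  "chg p q i = (if (i * p) div q > ((i - 1) * p) div q then B else A)"

lemma christoffel_prefix:
  assumes "0 < p" "p < q"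
  shows "m \<le> q \<Longrightarrow> concat (map phi (map (chg p q) [1..<m+1]))
     = map (hw p q) [0..<m + m * p div q]"
proof (induction m)
  case 0
  then show ?case by simp
next
  case (Suc m)
  define t where "t = m * p div q"
  define t' where "t' = Suc m * p div q"
  have q0: "0 < q" using assms by simp
  have t1: "t * q \<le> m * p" unfolding t_def by (rule div_bounds(1)[OF q0])
  have t2: "m * p < (t + 1) * q" unfolding t_def by (rule div_bounds(2)[OF q0])
  have t'1: "t' * q \<le> Suc m * p" unfolding t'_def by (rule div_bounds(1)[OF q0])
  have t'2: "Suc m * p < (t' + 1) * q" unfolding t'_def by (rule div_bounds(2)[OF q0])
  have tt: "t \<le> t'" unfolding t_def t'_def by (simp add: div_le_mono)
  have tt2: "t' \<le> t + 1"
  proof -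
    have e: "Suc m * p = m * p + p" by simp
    show ?thesis unfolding t'_def e t_def using step_le[OF assms(2), of "m*p"] by linarith
  qed
  have e1: "(p + q) * t = p * t + t * q" by (simp add: algebra_simps)
  have e2: "(m + t) * p = m * p + p * t" by (simp add: algebra_simps)
  have e3: "(t + 1) * q = t * q + q" by (simp add: algebra_simps)
  have e4: "(p + q) * Suc t = p * t + p + t * q + q" by (simp add: algebra_simps)
  have e5: "(m + t + 1) * p = m * p + p * t + p" by (simp add: algebra_simps)
  have e6: "Suc m * p = m * p + p" by (simp add: algebra_simps)
  have D0: "(m + t) * p div (p + q) = t"
  proof (rule div_nat_eqI)
    show "(p + q) * t \<le> (m + t) * p" unfolding e1 e2 using t1 by linarith
    show "(m + t) * p < (p + q) * Suc t" unfolding e4 e2 using t2 e3 by linarith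
  qed
  have D1: "(m + t + 1) * p div (p + q) = t"
  proof (rule div_nat_eqI)
    show "(p + q) * t \<le> (m + t + 1) * p" unfolding e1 e5 using t1 by linarith
    show "(m + t + 1) * p < (p + q) * Suc t"
    proof (cases "t' = t")
      case True
      then have "Suc m * p < (t + 1) * q" using t'2 by simp
      then show ?thesis unfolding e4 e5 using e6 e3 by linarith
    next
      case False
      then show ?thesis unfolding e4 e5 using t2 e3 by linarith
    qed
  qed
  have hL: "hw p q (m + t) = L"
  proof -
    have "hw p q (m + t) = (if (m + t) * p div (p + q) < (m + t + 1) * p div (p + q) then R else L)"
      using hw_div[OF q0, where j="m+t"] by simp
    then show ?thesis unfolding D0 D1 by simp
  qed
  have pre: "concat (map phi (map (chg p q) [1..<m+1]))
     = map (hw p q) [0..<m + t]" using Suc unfolding t_def by simp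
  have g0: "chg p q (Suc m) = (if t < t' then B else A)"
    unfolding t_def t'_def chg_def by simp
  have ln: "Suc m + Suc m * p div q = m + t' + 1" unfolding t'_def by simp
  have sp: "[1..<Suc m + 1] = [1..<m+1] @ [Suc m]" by simp
  have cc: "concat (map phi (map (chg p q) [1..<Suc m + 1])) = map (hw p q) [0..<m+t] @ phi (chg p q (Suc m))"
    unfolding sp map_append concat_append pre by simp
  show ?case
  proof (cases "t' = t")
    case True
    have g: "chg p q (Suc m) = A"
      unfolding g0 True by simp
    have le: "[0..<Suc m + Suc m * p div q] = [0..<m+t] @ [m+t]"
      unfolding ln True by simp
    show ?thesis unfolding cc le g using hL by simp
  next
    case False
    then have T: "t' = t + 1" using tt tt2 by simp
    have g: "chg p q (Suc m) = B"
      unfolding g0 T by simp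
    have e7: "(m + t + 1 + 1) * p = m * p + p * t + p + p" by (simp add: algebra_simps)
    have e8: "(p + q) * (t + 1) = p * t + p + t * q + q" by (simp add: algebra_simps)
    have e9: "(p + q) * Suc (t + 1) = p * t + p + p + t * q + q + q" by (simp add: algebra_simps)
    have e10: "(t + 1 + 1) * q = t * q + q + q" by (simp add: algebra_simps)
    have D2: "(m + t + 1 + 1) * p div (p + q) = t + 1"
    proof (rule div_nat_eqI)
      have "(t + 1) * q \<le> Suc m * p" using t'1 T by simp
      then show "(p + q) * (t + 1) \<le> (m + t + 1 + 1) * p" unfolding e7 e8 using e3 e6 by linarith
      show "(m + t + 1 + 1) * p < (p + q) * Suc (t + 1)" unfolding e7 e9 using t2 e3 assms by linarith
    qed
    have hR: "hw p q (m + t + 1) = R"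
    proof -
      have "hw p q (m + t + 1) = (if (m + t + 1) * p div (p + q) < (m + t + 1 + 1) * p div (p + q) then R else L)"
        using hw_div[OF q0, where j="m+t+1"] by simp
      then show ?thesis unfolding D1 D2 by simp
    qed
    have le: "[0..<Suc m + Suc m * p div q] = [0..<m+t] @ [m+t, m+t+1]"
      unfolding ln T by simp
    show ?thesis unfolding cc le g using hL hR by simp
  qed
qed

lemma W_eq:
  assumes "0 < p" "p < q"
  shows "ch_LLR p q = map (hw p q) [0..<p + q]"
proof -
  have c: "christoffel p q = map (chg p q) [1..<q+1]"
    unfolding christoffel_def chg_def by simp
  have "ch_LLR p q = map (hw p q) [0..<q + q * p div q]"
    using christoffel_prefix[OF assms order_refl] unfolding ch_LLR_alt c .
  moreover have "q + q * p div q = p + q" using assms by simp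
  ultimately show ?thesis by (simp only:)
qed



lemma cop: "coprime (p::nat) q \<Longrightarrow> coprime p (p + q)"
  by (simp add: coprime_iff_gcd_eq_1)

lemma lex_lt_irrefl: "\<not> lex_lt xs xs" by (induction xs) auto
lemma lex_lt_asym: "lex_lt xs ys \<Longrightarrow> \<not> lex_lt ys xs"
  by (induction xs ys rule: lex_lt.induct) auto
lemma lex_lt_nth: "length xs = length ys \<Longrightarrow> i < length xs \<Longrightarrow> take i xs = take i ys
   \<Longrightarrow> xs ! i = L \<Longrightarrow> ys ! i = R \<Longrightarrow> lex_lt xs ys"
proof (induction xs ys arbitrary: i rule: lex_lt.induct)
  case (1 x xs y ys)
  then show ?case by (cases i) auto
qed auto

lemma mulmod_inj:
  fixes p n :: nat
  assumes "coprime p n"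
  shows "inj_on (\<lambda>i. i * p mod n) {..<n}"
proof (rule inj_onI)
  fix i j assume "i \<in> {..<n}" "j \<in> {..<n}" "i * p mod n = j * p mod n"
  then have "[i * p = j * p] (mod n)" by (simp add: cong_def)
  then have "[i = j] (mod n)" using cong_mult_rcancel_nat[OF assms] by simp
  then show "i = j" using cong_less_modulus_unique_nat \<open>i \<in> {..<n}\<close> \<open>j \<in> {..<n}\<close> by auto
qed

lemma mulmod_surj:
  fixes p n :: nat
  assumes "coprime p n" "0 < n"
  shows "(\<lambda>i. i * p mod n) ` {..<n} = {..<n}"
  by (rule endo_inj_surj) (use assms mulmod_inj in auto)

definition fw :: "nat \<Rightarrow> nat \<Rightarrow> nat \<Rightarrow> letter list" where
  "fw p q c = map (\<lambda>i. if q \<le> (c + i * p) mod (p + q) then R else L) [0..<p + q]"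

lemma fw_nth:
  assumes "0 < q" "j < p + q"
  shows "fw p q x ! j = (if (x + j * p) div (p + q) < (x + Suc j * p) div (p + q) then R else L)"
proof -
  have pn: "p < p + q" using assms by simp
  have e: "x + Suc j * p = (x + j * p) + p" by simp
  have "fw p q x ! j = (if q \<le> (x + j * p) mod (p + q) then R else L)"
    unfolding fw_def using assms by simp
  also have "\<dots> = (if (x + j * p) div (p + q) < (x + Suc j * p) div (p + q) then R else L)"
  proof -
    have c: "((x + j * p) div (p + q) < (x + Suc j * p) div (p + q)) = (q \<le> (x + j * p) mod (p + q))"
      unfolding e using conv[OF pn, of "x + j * p"] by (simp only: add_diff_cancel_left')
    show ?thesis by (simp only: c)
  qed
  finally show ?thesis .
qed

lemma fw_lex:
  assumes p0: "0 < p" and pq: "p < q" and cop: "coprime p q" and cc: "c < c'" and c'n: "c' < p + q"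
  shows "lex_lt (fw p q c) (fw p q c')"
proof -
  define n where "n = p + q"
  have q0: "0 < q" using assms by simp
  have pn: "p < n" unfolding n_def using q0 by simp
  have copn: "coprime p n" unfolding n_def using cop by (simp add: coprime_iff_gcd_eq_1)
  define Af where "Af j = (c + j * p) div n" for j
  define Bf where "Bf j = (c' + j * p) div n" for j
  have AB: "Af j \<le> Bf j" for j unfolding Af_def Bf_def using cc by (simp add: div_le_mono)
  have Amono: "j \<le> k \<Longrightarrow> Af j \<le> Af k" for j k unfolding Af_def by (simp add: div_le_mono)
  have Bstep: "Bf (Suc j) \<le> Bf j + 1" for j
  proof -
    have e: "c' + Suc j * p = (c' + j * p) + p" by simp
    show ?thesis unfolding Bf_def e using step_le[OF pn, of "c' + j * p"] by linarith
  qed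
  have "n - c' < n" using cc c'n unfolding n_def by linarith
  then have "n - c' \<in> {..<n}" by (rule lessThan_iff[THEN iffD2])
  moreover have "(\<lambda>i. i * p mod n) ` {..<n} = {..<n}" using mulmod_surj[OF copn] pn by linarith
  ultimately have "n - c' \<in> (\<lambda>i. i * p mod n) ` {..<n}" by simp
  then obtain i where i: "i < n" "i * p mod n = n - c'" by auto
  have "(c' + i * p) mod n = (c' + i * p mod n) mod n" by (simp add: mod_add_right_eq)
  also have "\<dots> = 0" using i cc c'n unfolding n_def by simp
  finally have "n dvd (c' + i * p)" by (rule mod_0_imp_dvd)
  then have eq: "c' + i * p = n * Bf i" unfolding Bf_def by simp
  have "c + i * p < n * Bf i" using eq cc by linarith
  then have Ai: "Af i < Bf i" unfolding Af_def by (simp add: less_mult_imp_div_less mult.commute)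
  define d where "d = (LEAST j. Af j < Bf j)"
  have d1: "Af d < Bf d" unfolding d_def by (rule LeastI[of _ i]) (rule Ai)
  have d2: "d \<le> i" unfolding d_def by (rule Least_le) (rule Ai)
  have d3: "j < d \<Longrightarrow> Af j = Bf j" for j
    using not_less_Least[of j "\<lambda>j. Af j < Bf j"] AB[of j] unfolding d_def[symmetric] by simp
  have "Af 0 = Bf 0" unfolding Af_def Bf_def using cc c'n unfolding n_def by simp
  then have "d \<noteq> 0" using d1 by (metis less_irrefl)
  then obtain e where e: "d = Suc e" using not0_implies_Suc by blast
  have en: "e < n" using e d2 i by simp
  have lens: "length (fw p q c) = n" "length (fw p q c') = n" unfolding fw_def n_def by auto
  have tk: "take e (fw p q c) = take e (fw p q c')"
  proof (rule nth_equalityI)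
    show "length (take e (fw p q c)) = length (take e (fw p q c'))" using lens by simp
    fix j assume "j < length (take e (fw p q c))"
    then have j: "j < e" using lens en by simp
    then have "Af j = Bf j" "Af (Suc j) = Bf (Suc j)" using d3 e by auto
    then show "take e (fw p q c) ! j = take e (fw p q c') ! j"
      using j en fw_nth[OF q0, where j=j] unfolding Af_def Bf_def n_def by simp
  qed
  have Ae: "Af e = Bf e" using d3 e by simp
  have "Af d \<le> Af e" using d1 Bstep[of e] Ae e by simp
  then have L1: "fw p q c ! e = L" using fw_nth[OF q0, where j=e and x=c] en e unfolding Af_def n_def by simp
  have "Bf e < Bf d" using Ae Amono[of e d] d1 e by simp
  then have R1: "fw p q c' ! e = R" using fw_nth[OF q0, where j=e and x=c'] en e unfolding Bf_def n_def by simp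
  show ?thesis by (rule lex_lt_nth[OF _ _ tk L1 R1]) (use lens en in auto)
qed

lemma fw_lex_iff:
  assumes "0 < p" "p < q" "coprime p q" "a < p + q" "b < p + q"
  shows "lex_lt (fw p q a) (fw p q b) \<longleftrightarrow> a < b"
proof (cases a b rule: linorder_cases)
  case less
  then show ?thesis using fw_lex assms by auto
next
  case equal
  then show ?thesis using lex_lt_irrefl by auto
next
  case greater
  then show ?thesis using fw_lex[OF assms(1-3) greater assms(4)] lex_lt_asym by auto
qed



lemma len_W: "0 < p \<Longrightarrow> p < q \<Longrightarrow> length (ch_LLR p q) = p + q"
  using W_eq by simp

lemma rot_fw:
  assumes "0 < p" "p < q"
  shows "rotate k (ch_LLR p q) = fw p q (k * p mod (p + q))"
proof (rule nth_equalityI)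
  show "length (rotate k (ch_LLR p q)) = length (fw p q (k * p mod (p + q)))"
    using len_W[OF assms] by (simp add: fw_def)
  fix i assume "i < length (rotate k (ch_LLR p q))"
  then have i: "i < p + q" using len_W[OF assms] by simp
  have n0: "0 < p + q" using assms by simp
  have "rotate k (ch_LLR p q) ! i = ch_LLR p q ! ((k + i) mod (p + q))"
    using nth_rotate[of i "ch_LLR p q" k] i len_W[OF assms] by simp
  also have "\<dots> = hw p q ((k + i) mod (p + q))"
    unfolding W_eq[OF assms] using n0 by simp
  also have "\<dots> = (if q \<le> (k * p mod (p + q) + i * p) mod (p + q) then R else L)"
  proof -
    have "((k + i) mod (p + q)) * p mod (p + q) = ((k + i) * p) mod (p + q)"
      by (rule mod_mult_left_eq)
    also have "(k + i) * p = k * p + i * p" by (simp add: algebra_simps)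
    also have "(k * p + i * p) mod (p + q) = (k * p mod (p + q) + i * p) mod (p + q)"
      by (rule mod_add_left_eq[symmetric])
    finally show ?thesis unfolding hw_def by simp
  qed
  also have "\<dots> = fw p q (k * p mod (p + q)) ! i"
    unfolding fw_def using i by simp
  finally show "rotate k (ch_LLR p q) ! i = fw p q (k * p mod (p + q)) ! i" .
qed

lemma hd_rot:
  assumes "0 < p" "p < q"
  shows "hd (rotate k (ch_LLR p q)) = (if q \<le> k * p mod (p + q) then R else L)"
proof -
  have n0: "0 < p + q" using assms by simp
  have "hd (fw p q (k * p mod (p + q))) = fw p q (k * p mod (p + q)) ! 0"
    by (rule hd_conv_nth) (use n0 in \<open>simp add: fw_def\<close>)
  also have "\<dots> = (if q \<le> k * p mod (p + q) then R else L)"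
    unfolding fw_def using n0 by simp
  finally show ?thesis using rot_fw[OF assms] by simp
qed

lemma rank_eq:
  assumes p0: "0 < p" and pq: "p < q" and cop: "coprime p q"
  shows "rank (ch_LLR p q) k = Suc (k * p mod (p + q))"
proof -
  define n where "n = p + q"
  define \<sigma> where "\<sigma> i = i * p mod n" for i
  have n0: "0 < n" unfolding n_def using p0 by simp
  have copn: "coprime p n" unfolding n_def using cop by (simp add: coprime_iff_gcd_eq_1)
  have sl: "\<sigma> i < n" for i unfolding \<sigma>_def using n0 by simp
  have set: "{i. i < length (ch_LLR p q) \<and> lex_lt (rotate i (ch_LLR p q)) (rotate k (ch_LLR p q))}
      = {i \<in> {..<n}. \<sigma> i < \<sigma> k}"
  proof -
    have "lex_lt (rotate i (ch_LLR p q)) (rotate k (ch_LLR p q)) \<longleftrightarrow> \<sigma> i < \<sigma> k" for i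
      unfolding rot_fw[OF p0 pq] using fw_lex_iff[OF p0 pq cop, of "\<sigma> i" "\<sigma> k"] sl
      unfolding \<sigma>_def n_def by simp
    then show ?thesis using len_W[OF p0 pq] unfolding n_def by auto
  qed
  have inj: "inj_on \<sigma> {..<n}" unfolding \<sigma>_def by (rule mulmod_inj[OF copn])
  have surj: "\<sigma> ` {..<n} = {..<n}" unfolding \<sigma>_def by (rule mulmod_surj[OF copn n0])
  have img: "\<sigma> ` {i \<in> {..<n}. \<sigma> i < \<sigma> k} = {..<\<sigma> k}"
  proof
    show "\<sigma> ` {i \<in> {..<n}. \<sigma> i < \<sigma> k} \<subseteq> {..<\<sigma> k}" by auto
    show "{..<\<sigma> k} \<subseteq> \<sigma> ` {i \<in> {..<n}. \<sigma> i < \<sigma> k}"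
    proof
      fix y assume y: "y \<in> {..<\<sigma> k}"
      then have "y \<in> \<sigma> ` {..<n}" using surj sl[of k] by auto
      then obtain i where "i < n" "y = \<sigma> i" by auto
      then show "y \<in> \<sigma> ` {i \<in> {..<n}. \<sigma> i < \<sigma> k}" using y by auto
    qed
  qed
  have "card {i \<in> {..<n}. \<sigma> i < \<sigma> k} = card (\<sigma> ` {i \<in> {..<n}. \<sigma> i < \<sigma> k})"
    by (rule card_image[symmetric]) (rule inj_on_subset[OF inj], auto)
  also have "\<dots> = \<sigma> k" unfolding img by simp
  finally show ?thesis unfolding rank_def set \<sigma>_def n_def by simp
qed



lemma S_eq:
  assumes p0: "0 < p" and pq: "p < q" and cop: "coprime p q"
  shows "{(rank (ch_LLR p q) k, rank (ch_LLR p q) (Suc k mod length (ch_LLR p q))) | k. k < length (ch_LLR p q)}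
    = {(i, p + i) | i. 1 \<le> i \<and> i \<le> q} \<union> {(q + i, i) | i. 1 \<le> i \<and> i \<le> p}"
    (is "?S1 = ?S2")
proof -
  define n where "n = p + q"
  have n0: "0 < n" unfolding n_def using p0 by simp
  have copn: "coprime p n" unfolding n_def using cop by (simp add: coprime_iff_gcd_eq_1)
  have len: "length (ch_LLR p q) = n" using len_W[OF p0 pq] unfolding n_def .
  have rk: "rank (ch_LLR p q) k = Suc (k * p mod n)" for k using rank_eq[OF assms] unfolding n_def .
  have modeq: "(Suc k mod n) * p mod n = (k * p mod n + p) mod n" for k
  proof -
    have "(Suc k mod n) * p mod n = (Suc k * p) mod n" by (rule mod_mult_left_eq)
    also have "Suc k * p = k * p + p" by simp
    also have "(k * p + p) mod n = (k * p mod n + p) mod n" by (rule mod_add_left_eq[symmetric])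
    finally show ?thesis .
  qed
  have surj: "(\<lambda>i. i * p mod n) ` {..<n} = {..<n}" by (rule mulmod_surj[OF copn n0])
  have S1: "?S1 = {(Suc c, Suc ((c + p) mod n)) | c. c < n}"
  proof
    show "?S1 \<subseteq> {(Suc c, Suc ((c + p) mod n)) | c. c < n}"
    proof
      fix x assume "x \<in> ?S1"
      then obtain k where "k < n" "x = (rank (ch_LLR p q) k, rank (ch_LLR p q) (Suc k mod n))"
        unfolding len by auto
      then show "x \<in> {(Suc c, Suc ((c + p) mod n)) | c. c < n}"
        unfolding rk modeq using n0 by auto
    qed
    show "{(Suc c, Suc ((c + p) mod n)) | c. c < n} \<subseteq> ?S1"
    proof
      fix x assume "x \<in> {(Suc c, Suc ((c + p) mod n)) | c. c < n}"
      then obtain c where c: "c < n" "x = (Suc c, Suc ((c + p) mod n))" by auto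
      then have "c \<in> (\<lambda>i. i * p mod n) ` {..<n}" using surj by auto
      then obtain k where k: "k < n" "c = k * p mod n" by auto
      have "x = (rank (ch_LLR p q) k, rank (ch_LLR p q) (Suc k mod n))"
        unfolding rk modeq using c k by simp
      then show "x \<in> ?S1" unfolding len using k by auto
    qed
  qed
  have S2: "{(Suc c, Suc ((c + p) mod n)) | c. c < n} = ?S2"
  proof
    show "{(Suc c, Suc ((c + p) mod n)) | c. c < n} \<subseteq> ?S2"
    proof
      fix x assume "x \<in> {(Suc c, Suc ((c + p) mod n)) | c. c < n}"
      then obtain c where c: "c < n" "x = (Suc c, Suc ((c + p) mod n))" by auto
      show "x \<in> ?S2"
      proof (cases "c < q")
        case True
        then have "(c + p) mod n = c + p" unfolding n_def by simp
        then have "x = (Suc c, p + Suc c)" using c by simp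
        then show ?thesis using True by auto
      next
        case False
        have a: "n \<le> c + p" "c + p - n < n" using False c unfolding n_def by linarith+
        have "(c + p) mod n = (c + p - n) mod n" using a by (simp add: le_mod_geq)
        also have "\<dots> = c + p - n" using a by simp
        also have "\<dots> = c - q" unfolding n_def by simp
        finally have "x = (q + Suc (c - q), Suc (c - q))" using c False by simp
        moreover have "Suc (c - q) \<le> p" using c False unfolding n_def by linarith
        ultimately show ?thesis by auto
      qed
    qed
    show "?S2 \<subseteq> {(Suc c, Suc ((c + p) mod n)) | c. c < n}"
    proof
      fix x assume "x \<in> ?S2"
      then consider (a) i where "1 \<le> i" "i \<le> q" "x = (i, p + i)"
        | (b) i where "1 \<le> i" "i \<le> p" "x = (q + i, i)" by auto
      then show "x \<in> {(Suc c, Suc ((c + p) mod n)) | c. c < n}"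
      proof cases
        case a
        have "(i - 1 + p) mod n = i - 1 + p" using a unfolding n_def by simp
        then have "x = (Suc (i - 1), Suc ((i - 1 + p) mod n))" using a by simp
        moreover have "i - 1 < n" using a unfolding n_def by simp
        ultimately show ?thesis by blast
      next
        case b
        have e: "q + i - 1 + p = (i - 1) + n" using b unfolding n_def by simp
        have lt: "i - 1 < n" using b unfolding n_def by simp
        have "(i - 1 + n) mod n = (i - 1) mod n" by (rule mod_add_self2)
        also have "\<dots> = i - 1" using lt by simp
        finally have "(q + i - 1 + p) mod n = i - 1" unfolding e .
        then have "x = (Suc (q + i - 1), Suc ((q + i - 1 + p) mod n))" using b by simp
        moreover have "q + i - 1 < n" using b unfolding n_def by simp
        ultimately show ?thesis by blast
      qed
    qed
  qed
  show ?thesis using S1 S2 by simp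
qed

lemma over_L:
  assumes p0: "0 < p" and pq: "p < q" and cop: "coprime p q"
  shows "(\<exists>k. k < length (ch_LLR p q) \<and> x = rank (ch_LLR p q) k \<and> hd (rotate k (ch_LLR p q)) = L)
     \<longleftrightarrow> 1 \<le> x \<and> x \<le> q"
proof -
  define n where "n = p + q"
  have n0: "0 < n" unfolding n_def using p0 by simp
  have copn: "coprime p n" unfolding n_def using cop by (simp add: coprime_iff_gcd_eq_1)
  have len: "length (ch_LLR p q) = n" using len_W[OF p0 pq] unfolding n_def .
  have rk: "rank (ch_LLR p q) k = Suc (k * p mod n)" for k using rank_eq[OF assms] unfolding n_def .
  have hd: "hd (rotate k (ch_LLR p q)) = L \<longleftrightarrow> k * p mod n < q" for k
    using hd_rot[OF p0 pq, of k] unfolding n_def by auto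
  have surj: "(\<lambda>i. i * p mod n) ` {..<n} = {..<n}" by (rule mulmod_surj[OF copn n0])
  show ?thesis
  proof
    assume "\<exists>k. k < length (ch_LLR p q) \<and> x = rank (ch_LLR p q) k \<and> hd (rotate k (ch_LLR p q)) = L"
    then show "1 \<le> x \<and> x \<le> q" unfolding rk hd by auto
  next
    assume x: "1 \<le> x \<and> x \<le> q"
    then have "x - 1 \<in> (\<lambda>i. i * p mod n) ` {..<n}" using surj unfolding n_def by auto
    then obtain k where k: "k < n" "x - 1 = k * p mod n" by auto
    then show "\<exists>k. k < length (ch_LLR p q) \<and> x = rank (ch_LLR p q) k \<and> hd (rotate k (ch_LLR p q)) = L"
      unfolding len rk hd using x by (intro exI[of _ k]) auto
  qed
qed

lemma over_R:
  assumes p0: "0 < p" and pq: "p < q" and cop: "coprime p q"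
  shows "(\<exists>k. k < length (ch_LLR p q) \<and> x = rank (ch_LLR p q) k \<and> hd (rotate k (ch_LLR p q)) = R)
     \<longleftrightarrow> q < x \<and> x \<le> p + q"
proof -
  define n where "n = p + q"
  have n0: "0 < n" unfolding n_def using p0 by simp
  have copn: "coprime p n" unfolding n_def using cop by (simp add: coprime_iff_gcd_eq_1)
  have len: "length (ch_LLR p q) = n" using len_W[OF p0 pq] unfolding n_def .
  have rk: "rank (ch_LLR p q) k = Suc (k * p mod n)" for k using rank_eq[OF assms] unfolding n_def .
  have hd: "hd (rotate k (ch_LLR p q)) = R \<longleftrightarrow> q \<le> k * p mod n" for k
    using hd_rot[OF p0 pq, of k] unfolding n_def by auto
  have sl: "k * p mod n < n" for k using n0 by simp
  have surj: "(\<lambda>i. i * p mod n) ` {..<n} = {..<n}" by (rule mulmod_surj[OF copn n0])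
  show ?thesis
  proof
    assume "\<exists>k. k < length (ch_LLR p q) \<and> x = rank (ch_LLR p q) k \<and> hd (rotate k (ch_LLR p q)) = R"
    then obtain k where "x = Suc (k * p mod n)" "q \<le> k * p mod n" unfolding rk hd by auto
    then show "q < x \<and> x \<le> p + q" using sl[of k] unfolding n_def by auto
  next
    assume x: "q < x \<and> x \<le> p + q"
    then have "x - 1 \<in> (\<lambda>i. i * p mod n) ` {..<n}" using surj unfolding n_def by auto
    then obtain k where k: "k < n" "x - 1 = k * p mod n" by auto
    then show "\<exists>k. k < length (ch_LLR p q) \<and> x = rank (ch_LLR p q) k \<and> hd (rotate k (ch_LLR p q)) = R"
      unfolding len rk hd using x by (intro exI[of _ k]) auto
  qed
qed

theorem theorem4p2:
  fixes p q :: nat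
  assumes "0 < p" and "p < q" and "coprime p q"
  shows "modular_braid (ch_LLR p q) = lorenz_braid p q"
proof -
  let ?W = "ch_LLR p q"
  let ?S2 = "{(i, p + i) | i. 1 \<le> i \<and> i \<le> q} \<union> {(q + i, i) | i. 1 \<le> i \<and> i \<le> p}"
  have len: "length ?W = p + q" using len_W assms by simp
  have fs: "1 \<le> fst s \<and> fst s \<le> p + q" if "s \<in> ?S2" for s using that by auto
  have ov: "(\<exists>k l. k < length ?W \<and> l < length ?W \<and> fst s = rank ?W k \<and> fst t = rank ?W l
              \<and> hd (rotate k ?W) = L \<and> hd (rotate l ?W) = R) \<longleftrightarrow> (fst s \<le> q \<and> q < fst t)"
    if "s \<in> ?S2" "t \<in> ?S2" for s t
  proof -
    have "(\<exists>k l. k < length ?W \<and> l < length ?W \<and> fst s = rank ?W k \<and> fst t = rank ?W l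
              \<and> hd (rotate k ?W) = L \<and> hd (rotate l ?W) = R) \<longleftrightarrow>
          (\<exists>k. k < length ?W \<and> fst s = rank ?W k \<and> hd (rotate k ?W) = L) \<and>
          (\<exists>l. l < length ?W \<and> fst t = rank ?W l \<and> hd (rotate l ?W) = R)" by blast
    also have "\<dots> \<longleftrightarrow> (1 \<le> fst s \<and> fst s \<le> q) \<and> (q < fst t \<and> fst t \<le> p + q)"
      unfolding over_L[OF assms] over_R[OF assms] ..
    also have "\<dots> \<longleftrightarrow> (fst s \<le> q \<and> q < fst t)" using fs[OF that(1)] fs[OF that(2)] by auto
    finally show ?thesis .
  qed
  have C: "{(s, t). s \<in> ?S2 \<and> t \<in> ?S2 \<and> crosses s t \<and>
       (\<exists>k l. k < length ?W \<and> l < length ?W \<and> fst s = rank ?W k \<and> fst t = rank ?W l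
              \<and> hd (rotate k ?W) = L \<and> hd (rotate l ?W) = R)}
     = {(s, t). s \<in> ?S2 \<and> t \<in> ?S2 \<and> crosses s t \<and> (fst s \<le> q \<and> q < fst t)}"
    (is "?X = ?Y")
  proof
    show "?X \<subseteq> ?Y"
    proof
      fix z assume "z \<in> ?X"
      then obtain s t where z: "z = (s, t)" "s \<in> ?S2" "t \<in> ?S2" "crosses s t"
        "(\<exists>k l. k < length ?W \<and> l < length ?W \<and> fst s = rank ?W k \<and> fst t = rank ?W l
              \<and> hd (rotate k ?W) = L \<and> hd (rotate l ?W) = R)" by blast
      then have "fst s \<le> q \<and> q < fst t" using ov[OF z(2) z(3)] by blast
      then show "z \<in> ?Y" using z by blast
    qed
    show "?Y \<subseteq> ?X"
    proof
      fix z assume "z \<in> ?Y"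
      then obtain s t where z: "z = (s, t)" "s \<in> ?S2" "t \<in> ?S2" "crosses s t"
        "fst s \<le> q \<and> q < fst t" by blast
      then have "(\<exists>k l. k < length ?W \<and> l < length ?W \<and> fst s = rank ?W k \<and> fst t = rank ?W l
              \<and> hd (rotate k ?W) = L \<and> hd (rotate l ?W) = R)" using ov[OF z(2) z(3)] by blast
      then show "z \<in> ?X" using z by blast
    qed
  qed
  have "modular_braid ?W = straight_braid (length ?W) ?S2
     (\<lambda>s t. \<exists>k l. k < length ?W \<and> l < length ?W \<and> fst s = rank ?W k \<and> fst t = rank ?W l
              \<and> hd (rotate k ?W) = L \<and> hd (rotate l ?W) = R)"
    unfolding modular_braid_def S_eq[OF assms] ..
  also have "\<dots> = (p + q, ?S2, ?X)" unfolding straight_braid_def len by simp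
  also have "\<dots> = (p + q, ?S2, ?Y)" unfolding C ..
  also have "\<dots> = lorenz_braid p q" unfolding lorenz_braid_def straight_braid_def by simp
  finally show ?thesis .
qed


end
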